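(* Let $\theta>1$, $r\in(\theta^{-1},\theta^{-1/2}]$ and $\beta=\frac{1-r^2\theta}{r\theta}\max\big(\frac1{1-r},\frac1{r\theta-1}\big)$. Let $(P_1,\dots,P_n)$ be a random price sequence with values in $[1,\theta]$ whose maximum $P^*$ has law $F$, and $Y$ a random prediction with law $G$ on $[1,\theta]$ (arbitrary joint law). Then \[ \frac{\mathbb{E}[\mathsf{A}^1_r(P,Y)]}{\mathbb{E}[P^*]}\ \ge\ \frac1{r\theta}-\beta\sup_{\pi\in\Pi(F,G)}\frac{\int z\,|z-y|\,\mathrm{d}\pi(z,y)}{\mathbb{E}[P^*]}, \] where $\Pi(F,G)$ is the set of couplings of $F$ and $G$.
   Context: One-max search: fix $\theta>1$. Prices $p_1,\dots,p_n\in[1,\theta]$ are revealed one at a time; the algorithm receives at the start a prediction $y\in[1,\theta]$ of the maximum price. At each step it irrevocably accepts the current price (payoff = that price) or rejects it; if nothing is accepted the payoff is $1$. Let $\varphi_r(z)=\frac{r\theta-1}{1-r}+\frac{1-r^2\theta}{1-r}\cdot\frac{z}{r\theta}$ and $\Phi^1_r(z)=\max(r\theta,\varphi_r(z))$; $\mathsf{A}^1_r$ accepts the first price $p_i\ge\Phi^1_r(y)$, and $\mathsf{A}^1_r(P,Y)$ is its payoff on the realized prices and prediction. A coupling of $F,G$ is a probability measure on $[1,\theta]^2$ with marginals $F,G$. *)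

theory Defs
  imports "HOL-Probability.Probability"
begin

definition phi_r :: "real \<Rightarrow> real \<Rightarrow> real \<Rightarrow> real" where
  "phi_r \<theta> r z = (r * \<theta> - 1) / (1 - r) + (1 - r\<^sup>2 * \<theta>) / (1 - r) * (z / (r * \<theta>))"

definition Phi1 :: "real \<Rightarrow> real \<Rightarrow> real \<Rightarrow> real" where
  "Phi1 \<theta> r z = max (r * \<theta>) (phi_r \<theta> r z)"

text \<open>Payoff of algorithm A^1_r on prices p 0, ..., p (n-1) (revealed in this order)
  with prediction y: the first price at least Phi1 y is accepted; payoff 1 if none is.\<close>
definition A1 :: "real \<Rightarrow> real \<Rightarrow> nat \<Rightarrow> (nat \<Rightarrow> real) \<Rightarrow> real \<Rightarrow> real" where
  "A1 \<theta> r n p y =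
     (if \<exists>i<n. Phi1 \<theta> r y \<le> p i
      then p (LEAST i. i < n \<and> Phi1 \<theta> r y \<le> p i)
      else 1)"

text \<open>Couplings of F and G: probability measures on the (Borel) plane with marginals F and G.
  (For F, G supported on [1,theta], any such coupling is concentrated on [1,theta]^2.)\<close>
definition couplings :: "real measure \<Rightarrow> real measure \<Rightarrow> (real \<times> real) measure set" where
  "couplings F G = {\<pi>. prob_space \<pi> \<and> sets \<pi> = sets (borel :: (real \<times> real) measure)
      \<and> distr \<pi> borel fst = F \<and> distr \<pi> borel snd = G}"

end

theory Submission
  imports Defs
begin

lemma key_real:
  fixes \<theta> r m y \<beta> :: real
  assumes theta: "\<theta> > 1" and r_lo: "1 / \<theta> < r" and r2: "r\<^sup>2 * \<theta> \<le> 1"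
    and m: "1 \<le> m" "m \<le> \<theta>" and y: "1 \<le> y" "y \<le> \<theta>"
    and beta: "\<beta> = (1 - r\<^sup>2 * \<theta>) / (r * \<theta>) * max (1 / (1 - r)) (1 / (r * \<theta> - 1))"
  shows "Phi1 \<theta> r y \<le> m \<Longrightarrow> m / (r*\<theta>) - \<beta> * (m * \<bar>m - y\<bar>) \<le> Phi1 \<theta> r y"
    and "m < Phi1 \<theta> r y \<Longrightarrow> m / (r*\<theta>) - \<beta> * (m * \<bar>m - y\<bar>) \<le> 1"
proof -
  define a where "a = r * \<theta>"
  define c where "c = (1 - r\<^sup>2 * \<theta>) / (1 - r)"
  have a1: "a > 1" using r_lo theta unfolding a_def by (simp add: field_simps)
  have rpos: "r > 0" using a1 theta unfolding a_def by (smt (verit) mult_nonpos_nonneg)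
  have rlt1: "r < 1"
  proof (rule ccontr)
    assume "\<not> r < 1" then have "r\<^sup>2 \<ge> 1" by (simp add: one_le_power)
    then have "r\<^sup>2 * \<theta> > 1" using theta by (smt (verit) mult_le_cancel_right1)
    then show False using r2 by simp
  qed
  have c0: "c \<ge> 0" unfolding c_def using r2 rlt1 by simp
  have phi: "\<And>z. phi_r \<theta> r z = (a - 1)/(1 - r) + c * z / a"
    unfolding phi_r_def a_def c_def by simp
  have nz: "1 - r \<noteq> 0" "a \<noteq> 0" "\<theta> \<noteq> 0" using rlt1 a1 theta by auto
  have cm1: "c - 1 = r * (1 - a) / (1 - r)"
    using nz unfolding c_def a_def by (simp add: field_simps power2_eq_square)
  have ra: "r / a = 1 / \<theta>" unfolding a_def using nz rpos by simp
  have F1: "phi_r \<theta> r z - z / a = (a - 1)/(1 - r) * (1 - z/\<theta>)" for z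
  proof -
    have "phi_r \<theta> r z - z / a = (a - 1)/(1 - r) + (c - 1) * z / a" unfolding phi using nz by (simp add: field_simps)
    also have "\<dots> = (a - 1)/(1 - r) + (1 - a) / (1 - r) * (r / a) * z" unfolding cm1 using nz by (simp add: field_simps)
    also have "\<dots> = (a - 1)/(1 - r) * (1 - z/\<theta>)" proof -
      have "(1 - a) / (1 - r) = - ((a - 1)/(1 - r))" by (metis minus_diff_eq minus_divide_left)
      moreover have "\<And>k t z::real. k + (-k)*(1/t)*z = k*(1 - z/t)" by (simp add: algebra_simps)
      ultimately show ?thesis unfolding ra by metis
    qed
    finally show ?thesis .
  qed
  have F2: "phi_r \<theta> r z - z = (a - 1)/(1 - r) * (1 - z/a)" for z
  proof -
    have "phi_r \<theta> r z - z = (a - 1)/(1 - r) + (c - a) * z / a" unfolding phi using nz by (simp add: field_simps)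
    also have "c - a = (1 - a) / (1 - r)" using nz unfolding c_def a_def by (simp add: field_simps power2_eq_square)
    also have "(a - 1)/(1 - r) + (1 - a) / (1 - r) * z / a = (a - 1)/(1 - r) * (1 - z/a)"
    proof -
      have "(1 - a) / (1 - r) = - ((a - 1)/(1 - r))" by (metis minus_diff_eq minus_divide_left)
      moreover have "\<And>k t z::real. k + (-k)*z/t = k*(1 - z/t)" by (simp add: algebra_simps)
      ultimately show ?thesis by metis
    qed
    finally show ?thesis .
  qed
  have F3: "phi_r \<theta> r m - phi_r \<theta> r y = c * (m - y) / a"
    unfolding phi by (simp add: diff_divide_distrib right_diff_distrib)
  have T: "Phi1 \<theta> r y = max a (phi_r \<theta> r y)" unfolding Phi1_def a_def by simp
  have beta': "\<beta> = (1 - r\<^sup>2 * \<theta>) / a * max (1 / (1 - r)) (1 / (a - 1))" unfolding beta a_def ..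
  have D0: "(1 - r\<^sup>2 * \<theta>) / a \<ge> 0" using r2 a1 by simp
  have "\<beta> \<ge> (1 - r\<^sup>2 * \<theta>) / a * (1 / (1 - r))" unfolding beta'
    by (rule mult_left_mono[OF _ D0]) simp
  moreover have "(1 - r\<^sup>2 * \<theta>) / a * (1 / (1 - r)) = c / a" unfolding c_def by simp
  ultimately have b1: "\<beta> \<ge> c / a" by simp
  have "\<beta> \<ge> (1 - r\<^sup>2 * \<theta>) / a * (1 / (a - 1))" unfolding beta'
    by (rule mult_left_mono[OF _ D0]) simp
  moreover have "(1 - r\<^sup>2 * \<theta>) / a * (1 / (a - 1)) = c * (1 - r) / (a * (a - 1))" unfolding c_def using nz by simp
  moreover have "c * (1 - r) = 1 - r\<^sup>2 * \<theta>" unfolding c_def using nz by simp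
  ultimately have b2: "\<beta> \<ge> c * (1 - r) / (a * (a - 1))" by simp
  have bnn: "\<beta> \<ge> 0" using b1 c0 a1 by (smt (verit) divide_nonneg_pos)
  have kpos: "(a - 1)/(1 - r) > 0" using a1 rlt1 by simp
  show "Phi1 \<theta> r y \<le> m \<Longrightarrow> m / (r*\<theta>) - \<beta> * (m * \<bar>m - y\<bar>) \<le> Phi1 \<theta> r y"
  proof -
    assume h: "Phi1 \<theta> r y \<le> m"
    have "m / a \<le> phi_r \<theta> r m" using F1[of m] kpos m theta
      by (smt (verit) divide_le_eq_1_pos mult_nonneg_nonneg)
    also have "\<dots> = phi_r \<theta> r y + c * (m - y) / a" using F3 by simp
    also have "\<dots> \<le> Phi1 \<theta> r y + c / a * \<bar>m - y\<bar>"
    proof -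
      have "c * (m - y) / a \<le> c / a * \<bar>m - y\<bar>" using c0 a1
        by (simp add: divide_simps mult_left_mono)
      then show ?thesis using T by linarith
    qed
    also have "\<dots> \<le> Phi1 \<theta> r y + \<beta> * \<bar>m - y\<bar>" using mult_right_mono[OF b1 abs_ge_zero[of "m - y"]] by simp
    also have "\<dots> \<le> Phi1 \<theta> r y + \<beta> * (m * \<bar>m - y\<bar>)"
      using mult_left_mono[OF mult_right_mono[OF m(1) abs_ge_zero[of "m - y"]] bnn] by simp
    finally show ?thesis unfolding a_def by simp
  qed
  show "m < Phi1 \<theta> r y \<Longrightarrow> m / (r*\<theta>) - \<beta> * (m * \<bar>m - y\<bar>) \<le> 1"
  proof -
    assume h: "m < Phi1 \<theta> r y"
    have nn: "\<beta> * (m * \<bar>m - y\<bar>) \<ge> 0" using bnn m by simp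
    show ?thesis
    proof (cases "m \<le> a")
      case True
      then have "m / a \<le> 1" using a1 by simp
      then show ?thesis using nn unfolding a_def by linarith
    next
      case False
      then have hm: "m < phi_r \<theta> r y" using h T by simp
      have "(a - 1)/(1 - r) * (m/a - 1) = m - phi_r \<theta> r m" proof -
        have "m - phi_r \<theta> r m = - ((a - 1)/(1 - r) * (1 - m/a))" using F2[of m] by linarith
        moreover have "\<And>K x::real. -(K*(1-x)) = K*(x-1)" by (simp add: algebra_simps)
        ultimately show ?thesis by metis
      qed
      also have "\<dots> < phi_r \<theta> r y - phi_r \<theta> r m" using hm by simp
      also have "\<dots> = c * (y - m) / a" by (metis F3 minus_diff_eq minus_divide_left mult_minus_right)
      finally have e: "(a - 1)/(1 - r) * (m/a - 1) < c * (y - m) / a" .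
      have "m / a - 1 > 0" using False a1 by simp
      then have "0 < c * (y - m) / a" using e kpos by (smt (verit) mult_pos_pos)
      then have ym: "y > m" using a1 c0 by (auto simp: zero_less_divide_iff zero_less_mult_iff)
      have "m/a - 1 < c * (1 - r) / (a * (a - 1)) * (y - m)"
        using e kpos a1 rlt1 by (simp add: field_simps)
      also have "\<dots> \<le> \<beta> * (y - m)" using mult_right_mono[OF b2, of "y - m"] ym by simp
      also have "\<dots> \<le> \<beta> * (m * \<bar>m - y\<bar>)" using bnn m ym by (simp add: mult_left_mono)
      finally show ?thesis unfolding a_def by simp
    qed
  qed
qed

lemma m1: "(fst :: real\<times>real \<Rightarrow> real) \<in> borel_measurable borel" by (intro borel_measurable_continuous_onI continuous_intros)
lemma m2: "(snd :: real\<times>real \<Rightarrow> real) \<in> borel_measurable borel" by (intro borel_measurable_continuous_onI continuous_intros)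
lemma m3: "(\<lambda>(z::real, y::real). z * \<bar>z - y\<bar>) \<in> borel_measurable borel" unfolding case_prod_beta by (intro borel_measurable_continuous_onI continuous_intros)
lemma m4: "(\<lambda>y. Phi1 \<theta> r y) \<in> borel_measurable borel" unfolding Phi1_def phi_r_def by measurable
lemma m5: fixes Q :: "'a \<Rightarrow> nat \<Rightarrow> real" 
  assumes [measurable]: "\<And>i. (\<lambda>\<omega>. Q \<omega> i) \<in> borel_measurable M" and [measurable]: "T \<in> borel_measurable M"
  shows "(\<lambda>\<omega>. (\<Sum>i<n. if T \<omega> \<le> Q \<omega> i \<and> (\<forall>j<i. Q \<omega> j < T \<omega>) then Q \<omega> i else 0) + (if \<forall>i<n. Q \<omega> i < T \<omega> then 1 else 0)) \<in> borel_measurable M"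
  by measurable

lemma A1_bound:
  fixes \<theta> r y \<beta> :: real and p :: "nat \<Rightarrow> real"
  assumes theta: "\<theta> > 1" and r_lo: "1 / \<theta> < r" and r2: "r\<^sup>2 * \<theta> \<le> 1"
    and n: "n \<ge> 1" and p: "\<And>i. i < n \<Longrightarrow> p i \<in> {1..\<theta>}" and y: "y \<in> {1..\<theta>}"
    and beta: "\<beta> = (1 - r\<^sup>2 * \<theta>) / (r * \<theta>) * max (1 / (1 - r)) (1 / (r * \<theta> - 1))"
  shows "Max (p ` {..<n}) / (r*\<theta>) - \<beta> * (Max (p ` {..<n}) * \<bar>Max (p ` {..<n}) - y\<bar>) \<le> A1 \<theta> r n p y"
proof -
  define m where "m = Max (p ` {..<n})"
  have ne: "p ` {..<n} \<noteq> {}" using n by (auto simp: lessThan_empty_iff)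
  have "m \<in> p ` {..<n}" unfolding m_def using ne by (intro Max_in) auto
  then obtain k where k: "k < n" "m = p k" by auto
  have mr: "1 \<le> m" "m \<le> \<theta>" using p[OF k(1)] k by auto
  have ge: "\<And>i. i < n \<Longrightarrow> p i \<le> m" unfolding m_def by (intro Max_ge) auto
  note K = key_real[OF theta r_lo r2 mr(1) mr(2) _ _ beta] 
  show ?thesis
  proof (cases "\<exists>i<n. Phi1 \<theta> r y \<le> p i")
    case True
    then obtain i where i: "i < n" "Phi1 \<theta> r y \<le> p i" by auto
    define L where "L = (LEAST i. i < n \<and> Phi1 \<theta> r y \<le> p i)"
    have L: "L < n \<and> Phi1 \<theta> r y \<le> p L" unfolding L_def using i by (metis (mono_tags, lifting) LeastI)
    have A: "A1 \<theta> r n p y = p L" unfolding A1_def L_def using True by simp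
    have "Phi1 \<theta> r y \<le> m" using i ge by force
    from K(1)[OF _ _ this] y have "m / (r*\<theta>) - \<beta> * (m * \<bar>m - y\<bar>) \<le> Phi1 \<theta> r y" by auto
    then show ?thesis using A L unfolding m_def by simp
  next
    case False
    have A: "A1 \<theta> r n p y = 1" unfolding A1_def using False by auto
    have "m < Phi1 \<theta> r y" using False k by force
    from K(2)[OF _ _ this] y show ?thesis using A unfolding m_def by auto
  qed
qed

lemma A1_range:
  assumes "\<And>i. i < n \<Longrightarrow> p i \<in> {1..\<theta>}" "\<theta> \<ge> 1"
  shows "A1 \<theta> r n p y \<in> {1..\<theta>}"
proof (cases "\<exists>i<n. Phi1 \<theta> r y \<le> p i")
  case True
  then obtain i where i: "i < n" "Phi1 \<theta> r y \<le> p i" by auto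
  define L where "L = (LEAST i. i < n \<and> Phi1 \<theta> r y \<le> p i)"
  have L: "L < n \<and> Phi1 \<theta> r y \<le> p L" unfolding L_def using i by (metis (mono_tags, lifting) LeastI)
  have A: "A1 \<theta> r n p y = p L" unfolding A1_def L_def using True by simp
  then show ?thesis using assms(1)[OF conjunct1[OF L]] by simp
next
  case False
  then have "A1 \<theta> r n p y = 1" unfolding A1_def by auto
  then show ?thesis using assms(2) by simp
qed

lemma A1_restrict:
  "A1 \<theta> r n p y = A1 \<theta> r n (\<lambda>i. if i < n then p i else 1) y"
proof -
  have e: "(LEAST i. i < n \<and> Phi1 \<theta> r y \<le> (if i < n then p i else 1)) = (LEAST i. i < n \<and> Phi1 \<theta> r y \<le> p i)"
    by (rule arg_cong[where f=Least]) auto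
  show ?thesis
  proof (cases "\<exists>i<n. Phi1 \<theta> r y \<le> p i")
    case True
    then obtain i where i: "i < n" "Phi1 \<theta> r y \<le> p i" by auto
    have L: "(LEAST i. i < n \<and> Phi1 \<theta> r y \<le> p i) < n" using i by (metis (mono_tags, lifting) LeastI)
    show ?thesis unfolding A1_def e using True L by auto
  next
    case False
    then show ?thesis unfolding A1_def by auto
  qed
qed

lemma A1_sum:
  "A1 \<theta> r n p y = (\<Sum>i<n. if Phi1 \<theta> r y \<le> p i \<and> (\<forall>j<i. p j < Phi1 \<theta> r y) then p i else 0)
       + (if \<forall>i<n. p i < Phi1 \<theta> r y then 1 else 0)"
proof (cases "\<exists>i<n. Phi1 \<theta> r y \<le> p i")
  case True
  define T where "T = Phi1 \<theta> r y"
  then obtain i where i: "i < n" "T \<le> p i" using True by auto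
  define L where "L = (LEAST i. i < n \<and> T \<le> p i)"
  have L: "L < n \<and> T \<le> p L" unfolding L_def using i by (metis (mono_tags, lifting) LeastI)
  have A: "A1 \<theta> r n p y = p L" unfolding A1_def L_def T_def using True by simp
  have c: "(T \<le> p j \<and> (\<forall>l<j. p l < T)) = (j = L)" if "j < n" for j
  proof
    assume h: "T \<le> p j \<and> (\<forall>l<j. p l < T)"
    have "L \<le> j" unfolding L_def using h that by (intro Least_le) auto
    moreover have "\<not> L < j" using h L by force
    ultimately show "j = L" by simp
  next
    assume "j = L"
    moreover have "\<forall>l<L. p l < T"
    proof (intro allI impI)
      fix l assume "l < L"
      then have "\<not> (l < n \<and> T \<le> p l)" unfolding L_def by (rule not_less_Least)
      then show "p l < T" using \<open>l < L\<close> L by auto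
    qed
    ultimately show "T \<le> p j \<and> (\<forall>l<j. p l < T)" using L by simp
  qed
  have "(\<Sum>j<n. if T \<le> p j \<and> (\<forall>l<j. p l < T) then p j else 0) = (\<Sum>j<n. if j = L then p j else 0)"
    by (rule sum.cong) (auto simp: c)
  also have "\<dots> = p L" using L by (simp add: sum.delta)
  finally show ?thesis using A True unfolding T_def by force
next
  case False
  then show ?thesis unfolding A1_def by (auto intro!: sum.neutral)
qed

theorem corollary9:
  fixes \<theta> r :: real and n :: nat
    and M :: "'a measure" and P :: "'a \<Rightarrow> nat \<Rightarrow> real" and Y :: "'a \<Rightarrow> real"
  assumes theta: "\<theta> > 1"
    and r_lo: "1 / \<theta> < r" and r_hi: "r \<le> 1 / sqrt \<theta>"
    and n_pos: "n \<ge> 1"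
    and M: "prob_space M"
    and P_meas: "\<And>i. i < n \<Longrightarrow> (\<lambda>\<omega>. P \<omega> i) \<in> borel_measurable M"
    and P_range: "\<And>\<omega> i. \<omega> \<in> space M \<Longrightarrow> i < n \<Longrightarrow> P \<omega> i \<in> {1..\<theta>}"
    and Y_meas: "Y \<in> borel_measurable M"
    and Y_range: "\<And>\<omega>. \<omega> \<in> space M \<Longrightarrow> Y \<omega> \<in> {1..\<theta>}"
  shows "(let Pstar = (\<lambda>\<omega>. Max ((P \<omega>) ` {..<n}));
              F = distr M borel Pstar;
              G = distr M borel Y;
              \<beta> = (1 - r\<^sup>2 * \<theta>) / (r * \<theta>) * max (1 / (1 - r)) (1 / (r * \<theta> - 1))
          in (integral\<^sup>L M (\<lambda>\<omega>. A1 \<theta> r n (P \<omega>) (Y \<omega>))) / (integral\<^sup>L M Pstar)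
             \<ge> 1 / (r * \<theta>) - \<beta> * (Sup ((\<lambda>\<pi>. integral\<^sup>L \<pi> (\<lambda>(z, y). z * \<bar>z - y\<bar>)) ` couplings F G))
                                    / (integral\<^sup>L M Pstar))"
   proof -
  define Pst where "Pst = (\<lambda>\<omega>. Max ((P \<omega>) ` {..<n}))"
  define \<beta> where "\<beta> = (1 - r\<^sup>2 * \<theta>) / (r * \<theta>) * max (1 / (1 - r)) (1 / (r * \<theta> - 1))"
  define F where "F = distr M borel Pst"
  define G where "G = distr M borel Y"
  define S where "S = Sup ((\<lambda>\<pi>. integral\<^sup>L \<pi> (\<lambda>(z, y). z * \<bar>z - y\<bar>)) ` couplings F G)"
  interpret M: prob_space M by (rule M)
  have r2: "r\<^sup>2 * \<theta> \<le> 1"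
  proof -
    have "sqrt \<theta> > 0" using theta by simp
    then have "r * sqrt \<theta> \<le> 1" using r_hi by (simp add: field_simps)
    moreover have "r \<ge> 0" using r_lo theta by (smt (verit) divide_pos_pos)
    ultimately have "(r * sqrt \<theta>)^2 \<le> 1" using theta by (intro power_le_one mult_nonneg_nonneg) auto
    then show ?thesis using theta by (simp add: power_mult_distrib)
  qed
  have a1: "r * \<theta> > 1" using r_lo theta by (simp add: field_simps)
  have rlt1: "r < 1"
  proof (rule ccontr)
    assume "\<not> r < 1" then have "r\<^sup>2 \<ge> 1" by (simp add: one_le_power)
    then have "r\<^sup>2 * \<theta> > 1" using theta by (smt (verit) mult_le_cancel_right1)
    then show False using r2 by simp
  qed
  have bnn: "\<beta> \<ge> 0" unfolding \<beta>_def using r2 a1 rlt1 by (intro mult_nonneg_nonneg) (auto simp: le_max_iff_disj)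
  define Q where "Q = (\<lambda>\<omega> i. if i < n then P \<omega> i else 1)"
  have Qm[measurable]: "(\<lambda>\<omega>. Q \<omega> i) \<in> borel_measurable M" for i
    by (cases "i < n") (simp_all add: Q_def P_meas)
  have Ym[measurable]: "Y \<in> borel_measurable M" by (rule Y_meas)
  have Tm[measurable]: "(\<lambda>\<omega>. Phi1 \<theta> r (Y \<omega>)) \<in> borel_measurable M"
    using measurable_comp[OF Y_meas m4] by (simp add: comp_def)
  have A_eq: "A1 \<theta> r n (P \<omega>) (Y \<omega>) = (\<Sum>i<n. if Phi1 \<theta> r (Y \<omega>) \<le> Q \<omega> i \<and> (\<forall>j<i. Q \<omega> j < Phi1 \<theta> r (Y \<omega>)) then Q \<omega> i else 0)
       + (if \<forall>i<n. Q \<omega> i < Phi1 \<theta> r (Y \<omega>) then 1 else 0)" for \<omega>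
    unfolding Q_def by (subst A1_restrict) (rule A1_sum)
  have Am: "(\<lambda>\<omega>. A1 \<theta> r n (P \<omega>) (Y \<omega>)) \<in> borel_measurable M"
    unfolding A_eq by measurable
  have Pm[measurable]: "Pst \<in> borel_measurable M"
    unfolding Pst_def using P_meas by (intro borel_measurable_Max) auto
  have Pr: "Pst \<omega> \<in> {1..\<theta>}" if "\<omega> \<in> space M" for \<omega>
  proof -
    have "Pst \<omega> \<in> P \<omega> ` {..<n}" unfolding Pst_def using n_pos by (intro Max_in) (auto simp: lessThan_empty_iff)
    then show ?thesis using P_range[OF that] by auto
  qed
  have Ar: "A1 \<theta> r n (P \<omega>) (Y \<omega>) \<in> {1..\<theta>}" if "\<omega> \<in> space M" for \<omega>
    using A1_range[of n "P \<omega>" \<theta>] P_range[OF that] theta by auto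
  have Aint: "integrable M (\<lambda>\<omega>. A1 \<theta> r n (P \<omega>) (Y \<omega>))"
  proof (rule M.integrable_const_bound[where B=\<theta>])
    show "AE x in M. norm (A1 \<theta> r n (P x) (Y x)) \<le> \<theta>"
    proof (rule AE_I2)
      fix x assume "x \<in> space M"
      from Ar[OF this] show "norm (A1 \<theta> r n (P x) (Y x)) \<le> \<theta>" by auto
    qed
  qed (rule Am)
  have Pint: "integrable M Pst"
  proof (rule M.integrable_const_bound[where B=\<theta>])
    show "AE x in M. norm (Pst x) \<le> \<theta>"
    proof (rule AE_I2)
      fix x assume "x \<in> space M"
      from Pr[OF this] show "norm (Pst x) \<le> \<theta>" by auto
    qed
  qed (rule Pm)
  define g where "g = (\<lambda>\<omega>. Pst \<omega> * \<bar>Pst \<omega> - Y \<omega>\<bar>)"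
  have gm: "g \<in> borel_measurable M" unfolding g_def by measurable
  have gint: "integrable M g"
  proof (rule M.integrable_const_bound[where B="\<theta> * \<theta>"])
    show "AE x in M. norm (g x) \<le> \<theta> * \<theta>"
    proof (rule AE_I2)
      fix x assume x: "x \<in> space M"
      have "\<bar>Pst x - Y x\<bar> \<le> \<theta>" using Pr[OF x] Y_range[OF x] by auto
      then have "Pst x * \<bar>Pst x - Y x\<bar> \<le> \<theta> * \<theta>" using Pr[OF x] theta by (intro mult_mono) auto
      then show "norm (g x) \<le> \<theta> * \<theta>" using Pr[OF x] unfolding g_def by simp
    qed
  qed (rule gm)
  have E1: "integral\<^sup>L M Pst \<ge> 1"
  proof -
    have "integral\<^sup>L M (\<lambda>_. 1) \<le> integral\<^sup>L M Pst"
      using Pr by (intro integral_mono Pint) auto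
    then show ?thesis using M.prob_space by simp
  qed
  have low: "integral\<^sup>L M Pst / (r*\<theta>) - \<beta> * integral\<^sup>L M g \<le> integral\<^sup>L M (\<lambda>\<omega>. A1 \<theta> r n (P \<omega>) (Y \<omega>))"
  proof -
    have "integral\<^sup>L M (\<lambda>\<omega>. Pst \<omega> / (r*\<theta>) - \<beta> * g \<omega>) \<le> integral\<^sup>L M (\<lambda>\<omega>. A1 \<theta> r n (P \<omega>) (Y \<omega>))"
    proof (rule integral_mono)
      show "integrable M (\<lambda>\<omega>. Pst \<omega> / (r*\<theta>) - \<beta> * g \<omega>)" using Pint gint by auto
      show "integrable M (\<lambda>\<omega>. A1 \<theta> r n (P \<omega>) (Y \<omega>))" by (rule Aint)
      fix \<omega> assume w: "\<omega> \<in> space M"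
      show "Pst \<omega> / (r*\<theta>) - \<beta> * g \<omega> \<le> A1 \<theta> r n (P \<omega>) (Y \<omega>)"
        unfolding g_def Pst_def
        by (rule A1_bound[OF theta r_lo r2 n_pos P_range[OF w] Y_range[OF w] \<beta>_def])
    qed
    moreover have "integral\<^sup>L M (\<lambda>\<omega>. Pst \<omega> / (r*\<theta>) - \<beta> * g \<omega>) = integral\<^sup>L M Pst / (r*\<theta>) - \<beta> * integral\<^sup>L M g"
      using Pint gint by simp
    ultimately show ?thesis by simp
  qed
  define \<pi>0 where "\<pi>0 = distr M borel (\<lambda>\<omega>. (Pst \<omega>, Y \<omega>))"
  have pm: "(\<lambda>\<omega>. (Pst \<omega>, Y \<omega>)) \<in> borel_measurable M" by measurable
  have coup: "\<pi>0 \<in> couplings F G"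
    unfolding couplings_def \<pi>0_def F_def G_def
    using M.prob_space_distr[OF pm] distr_distr[OF m1 pm] distr_distr[OF m2 pm]
    by (simp add: comp_def)
  have gX: "integral\<^sup>L \<pi>0 (\<lambda>(z, y). z * \<bar>z - y\<bar>) = integral\<^sup>L M g"
    unfolding \<pi>0_def g_def by (subst integral_distr[OF pm m3]) simp
  have bdd: "bdd_above ((\<lambda>\<pi>. integral\<^sup>L \<pi> (\<lambda>(z, y). z * \<bar>z - y\<bar>)) ` couplings F G)"
  proof (rule bdd_aboveI2)
    fix \<pi> assume pc: "\<pi> \<in> couplings F G"
    then have ps: "prob_space \<pi>" and ss: "sets \<pi> = sets borel" and dF: "distr \<pi> borel fst = F"
      and dG: "distr \<pi> borel snd = G" unfolding couplings_def by auto
    have fm: "fst \<in> measurable \<pi> borel" using m1 by (subst measurable_cong_sets[OF ss refl])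
    have sm: "snd \<in> measurable \<pi> borel" using m2 by (subst measurable_cong_sets[OF ss refl])
    have "AE z in F. z \<in> {1..\<theta>}" unfolding F_def
      using Pr by (subst AE_distr_iff[OF Pm]) (auto intro!: AE_I2)
    then have "AE z in distr \<pi> borel fst. z \<in> {1..\<theta>}" unfolding dF .
    from AE_distrD[OF fm this] have a1: "AE x in \<pi>. fst x \<in> {1..\<theta>}" .
    have "AE z in G. z \<in> {1..\<theta>}" unfolding G_def
      using Y_range by (subst AE_distr_iff[OF Ym]) (auto intro!: AE_I2)
    then have "AE z in distr \<pi> borel snd. z \<in> {1..\<theta>}" unfolding dG .
    from AE_distrD[OF sm this] have a2: "AE x in \<pi>. snd x \<in> {1..\<theta>}" .
    interpret pi: prob_space \<pi> by (rule ps)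
    have "integral\<^sup>L \<pi> (\<lambda>(z, y). z * \<bar>z - y\<bar>) \<le> integral\<^sup>L \<pi> (\<lambda>_. \<theta> * \<theta>)"
    proof (rule integral_mono_AE')
      show "integrable \<pi> (\<lambda>_. \<theta> * \<theta>)" by simp
      show "AE x in \<pi>. 0 \<le> \<theta> * \<theta>" using theta by simp
      show "AE x in \<pi>. (case x of (z, y) \<Rightarrow> z * \<bar>z - y\<bar>) \<le> \<theta> * \<theta>"
        using a1 a2
      proof eventually_elim
        case (elim x)
        obtain z y where xy: "x = (z, y)" by force
        have "\<bar>z - y\<bar> \<le> \<theta>" using elim xy by auto
        then have "z * \<bar>z - y\<bar> \<le> \<theta> * \<theta>" using elim xy theta by (intro mult_mono) auto
        then show ?case using xy by simp
      qed
    qed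
    then show "integral\<^sup>L \<pi> (\<lambda>(z, y). z * \<bar>z - y\<bar>) \<le> \<theta> * \<theta>" using pi.prob_space by simp
  qed
  have XS: "integral\<^sup>L M g \<le> S" unfolding S_def
    using cSup_upper[OF imageI[OF coup] bdd] gX by simp
  have main: "1 / (r * \<theta>) - \<beta> * S / integral\<^sup>L M Pst \<le> integral\<^sup>L M (\<lambda>\<omega>. A1 \<theta> r n (P \<omega>) (Y \<omega>)) / integral\<^sup>L M Pst"
  proof -
    define E where "E = integral\<^sup>L M Pst"
    have Epos: "E > 0" using E1 unfolding E_def by simp
    have "E / (r*\<theta>) - \<beta> * S \<le> integral\<^sup>L M (\<lambda>\<omega>. A1 \<theta> r n (P \<omega>) (Y \<omega>))"
      using low mult_left_mono[OF XS bnn] unfolding E_def by linarith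
    then have "(E / (r*\<theta>) - \<beta> * S) / E \<le> integral\<^sup>L M (\<lambda>\<omega>. A1 \<theta> r n (P \<omega>) (Y \<omega>)) / E"
      using Epos by (simp add: divide_right_mono)
    moreover have "(E / (r*\<theta>) - \<beta> * S) / E = 1 / (r * \<theta>) - \<beta> * S / E"
      using Epos by (simp add: diff_divide_distrib)
    ultimately show ?thesis unfolding E_def by simp
  qed
  show ?thesis unfolding Let_def Pst_def[symmetric] \<beta>_def[symmetric] F_def[symmetric] G_def[symmetric]
    S_def[symmetric] using main by simp
qed

end
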